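(* Consider $J$ portfolios; portfolio $j$ consists of a set $\mathcal{I}_j$ of independent accounts with standard deviations $\sigma_i>0$ ($i\in\mathcal{I}_j$) and a dependent block $\mathcal{D}_j$ of $|\mathcal{D}_j|$ accounts whose total has standard deviation $\sigma_{\mathcal{D},j}\ge0$ (with $\sigma_{\mathcal{D},j}\sqrt{|\mathcal{D}_j|}=0$ if $\mathcal{D}_j=\emptyset$). Let $C>0$ be the budget and $V_j>0$ the variance bounds. Put $\gamma_j=\sigma_{\mathcal{D},j}\sqrt{|\mathcal{D}_j|}+\sum_{i\in\mathcal{I}_j}\sigma_i>0$ and $\epsilon_j=\gamma_j/V_j$. For a working set $\mathcal{B}\subsetneq\{1,\dots,J\}$ put $C^{\mathcal{B}}_{\mathrm{Rem}}=C-\sum_{j\in\mathcal{B}}\gamma_j\epsilon_j$, $d^{\mathcal{B}}=\sum_{j\notin\mathcal{B}}\gamma_j$, $\alpha(\mathcal{B})=C^{\mathcal{B}}_{\mathrm{Rem}}/d^{\mathcal{B}}$, and $e_j(\mathcal{B})=\epsilon_j$ if $j\in\mathcal{B}$, $e_j(\mathcal{B})=\alpha(\mathcal{B})$ if $j\notin\mathcal{B}$. The allocation $\mathbf{R}^\ast(\mathcal{B})$ assigns $R_i=\sigma_i e_j(\mathcal{B})$ realisations to $i\in\mathcal{I}_j$ and $r_j=\frac{\sigma_{\mathcal{D},j}}{\sqrt{|\mathcal{D}_j|}}e_j(\mathcal{B})$ to each account of $\mathcal{D}_j$; under it the variance of the estimator of portfolio $j$'s expected collections is $\operatorname{Var}_{\mathcal{B}}(\hat\mu_j)=\sigma^2_{\mathcal{D},j}/r_j+\sum_{i\in\mathcal{I}_j}\sigma_i^2/R_i=\gamma_j/e_j(\mathcal{B})$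 when $e_j(\mathcal{B})>0$, and we set $\operatorname{Var}_{\mathcal{B}}(\hat\mu_j)=+\infty$ if $e_j(\mathcal{B})\le0$ (no budget left). Suppose $\alpha(\mathcal{B})>0$, that at least two indices lie outside $\mathcal{B}$, and that some $j'\notin\mathcal{B}$ has $\operatorname{Var}_{\mathcal{B}}(\hat\mu_{j'})>V_{j'}$. Let $\mathcal{B}^+=\mathcal{B}\cup\{j'\}$. Then for every $j\notin\mathcal{B}^+$, $\operatorname{Var}_{\mathcal{B}^+}(\hat\mu_j)>\operatorname{Var}_{\mathcal{B}}(\hat\mu_j)$.
   Context: This concerns the relaxed allocation problem: choose positive reals $r_j$ (common realisation number for accounts of $\mathcal{D}_j$) and $R_i$ ($i\in\mathcal{I}=\cup_j\mathcal{I}_j$) to minimise $\sum_j\big(\sigma^2_{\mathcal{D},j}/r_j+\sum_{i\in\mathcal{I}_j}\sigma_i^2/R_i\big)$ subject to $\sum_j r_j|\mathcal{D}_j|+\sum_{i\in\mathcal{I}}R_i=C$ and $\sigma^2_{\mathcal{D},j}/r_j+\sum_{i\in\mathcal{I}_j}\sigma_i^2/R_i\le V_j$ for all $j$. $\mathbf{R}^\ast(\mathcal{B})$ is the solution of the stationarity equations of the Lagrangian when the constraints in $\mathcal{B}$ are active (hold with equality) and the others have zero multiplier. *)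

theory Defs
  imports "HOL-Analysis.Analysis" "HOL-Library.Extended_Real"
begin

text \<open>Portfolio j has independent accounts I j
 (a finite set of accounts of type 'a) with standard deviations sg i, and a dependent block
 of nD j accounts whose total has standard deviation sigD j.\<close>

definition gam :: "(nat \<Rightarrow> real) \<Rightarrow> (nat \<Rightarrow> nat) \<Rightarrow> ('a \<Rightarrow> real) \<Rightarrow> (nat \<Rightarrow> 'a set) \<Rightarrow> nat \<Rightarrow> real" where
  "gam sigD nD sg I j = sigD j * sqrt (real (nD j)) + (\<Sum>i\<in>I j. sg i)"

definition epsl :: "(nat \<Rightarrow> real) \<Rightarrow> (nat \<Rightarrow> nat) \<Rightarrow> ('a \<Rightarrow> real) \<Rightarrow> (nat \<Rightarrow> 'a set) \<Rightarrow> (nat \<Rightarrow> real) \<Rightarrow> nat \<Rightarrow> real" where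
  "epsl sigD nD sg I V j = gam sigD nD sg I j / V j"

definition CRem :: "(nat \<Rightarrow> real) \<Rightarrow> (nat \<Rightarrow> nat) \<Rightarrow> ('a \<Rightarrow> real) \<Rightarrow> (nat \<Rightarrow> 'a set) \<Rightarrow> (nat \<Rightarrow> real) \<Rightarrow> real \<Rightarrow> nat set \<Rightarrow> real" where
  "CRem sigD nD sg I V C B = C - (\<Sum>j\<in>B. gam sigD nD sg I j * epsl sigD nD sg I V j)"

definition dB :: "(nat \<Rightarrow> real) \<Rightarrow> (nat \<Rightarrow> nat) \<Rightarrow> ('a \<Rightarrow> real) \<Rightarrow> (nat \<Rightarrow> 'a set) \<Rightarrow> nat \<Rightarrow> nat set \<Rightarrow> real" where
  "dB sigD nD sg I J B = (\<Sum>j\<in>{1..J} - B. gam sigD nD sg I j)"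

definition alphaB :: "(nat \<Rightarrow> real) \<Rightarrow> (nat \<Rightarrow> nat) \<Rightarrow> ('a \<Rightarrow> real) \<Rightarrow> (nat \<Rightarrow> 'a set) \<Rightarrow> (nat \<Rightarrow> real) \<Rightarrow> real \<Rightarrow> nat \<Rightarrow> nat set \<Rightarrow> real" where
  "alphaB sigD nD sg I V C J B = CRem sigD nD sg I V C B / dB sigD nD sg I J B"

definition eB :: "(nat \<Rightarrow> real) \<Rightarrow> (nat \<Rightarrow> nat) \<Rightarrow> ('a \<Rightarrow> real) \<Rightarrow> (nat \<Rightarrow> 'a set) \<Rightarrow> (nat \<Rightarrow> real) \<Rightarrow> real \<Rightarrow> nat \<Rightarrow> nat set \<Rightarrow> nat \<Rightarrow> real" where
  "eB sigD nD sg I V C J B j =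
     (if j \<in> B then epsl sigD nD sg I V j else alphaB sigD nD sg I V C J B)"

definition rdep :: "(nat \<Rightarrow> real) \<Rightarrow> (nat \<Rightarrow> nat) \<Rightarrow> ('a \<Rightarrow> real) \<Rightarrow> (nat \<Rightarrow> 'a set) \<Rightarrow> (nat \<Rightarrow> real) \<Rightarrow> real \<Rightarrow> nat \<Rightarrow> nat set \<Rightarrow> nat \<Rightarrow> real" where
  "rdep sigD nD sg I V C J B j = sigD j / sqrt (real (nD j)) * eB sigD nD sg I V C J B j"

definition Rind :: "(nat \<Rightarrow> real) \<Rightarrow> (nat \<Rightarrow> nat) \<Rightarrow> ('a \<Rightarrow> real) \<Rightarrow> (nat \<Rightarrow> 'a set) \<Rightarrow> (nat \<Rightarrow> real) \<Rightarrow> real \<Rightarrow> nat \<Rightarrow> nat set \<Rightarrow> nat \<Rightarrow> 'a \<Rightarrow> real" where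
  "Rind sigD nD sg I V C J B j i = sg i * eB sigD nD sg I V C J B j"

definition VarB :: "(nat \<Rightarrow> real) \<Rightarrow> (nat \<Rightarrow> nat) \<Rightarrow> ('a \<Rightarrow> real) \<Rightarrow> (nat \<Rightarrow> 'a set) \<Rightarrow> (nat \<Rightarrow> real) \<Rightarrow> real \<Rightarrow> nat \<Rightarrow> nat set \<Rightarrow> nat \<Rightarrow> ereal" where
  "VarB sigD nD sg I V C J B j =
     (if eB sigD nD sg I V C J B j > 0 then
        ereal ((if nD j = 0 then 0 else (sigD j)\<^sup>2 / rdep sigD nD sg I V C J B j)
               + (\<Sum>i\<in>I j. (sg i)\<^sup>2 / Rind sigD nD sg I V C J B j i))
      else \<infinity>)"

end

theory Submission
  imports Defs
begin

lemma var_eq: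
  assumes fin: "finite (I j)" and sp: "\<And>i. i \<in> I j \<Longrightarrow> sg i > 0"
    and sd: "sigD j \<ge> 0" and e: "eB sigD nD sg I V C J B j > 0"
  shows "VarB sigD nD sg I V C J B j = ereal (gam sigD nD sg I j / eB sigD nD sg I V C J B j)"
proof -
  define e where "e = eB sigD nD sg I V C J B j"
  have e0: "e > 0" using e e_def by simp
  have dep: "(if nD j = 0 then 0 else (sigD j)\<^sup>2 / rdep sigD nD sg I V C J B j)
        = sigD j * sqrt (real (nD j)) / e"
  proof (cases "nD j = 0")
    case True then show ?thesis by simp
  next
    case False
    show ?thesis
    proof (cases "sigD j = 0")
      case True then show ?thesis using False by (simp add: rdep_def)
    next
      case F2: False
      have "sqrt (real (nD j)) > 0" using False by simp
      then show ?thesis using False F2 e0 unfolding rdep_def e_def[symmetric]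
        by (simp add: field_simps power2_eq_square)
    qed
  qed
  have ind: "(\<Sum>i\<in>I j. (sg i)\<^sup>2 / Rind sigD nD sg I V C J B j i) = (\<Sum>i\<in>I j. sg i) / e"
    unfolding sum_divide_distrib
  proof (rule sum.cong)
    fix i assume "i \<in> I j"
    then have "sg i > 0" using sp by simp
    then show "(sg i)\<^sup>2 / Rind sigD nD sg I V C J B j i = sg i / e"
      using e0 unfolding Rind_def e_def[symmetric] by (simp add: field_simps power2_eq_square)
  qed simp
  show ?thesis unfolding VarB_def e_def[symmetric] using e0 dep ind
    by (simp add: gam_def add_divide_distrib)
qed

theorem lemma5:
  fixes J :: nat and I :: "nat \<Rightarrow> 'a set" and sg :: "'a \<Rightarrow> real"
    and sigD :: "nat \<Rightarrow> real" and nD :: "nat \<Rightarrow> nat"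
    and V :: "nat \<Rightarrow> real" and C :: real and B :: "nat set" and j' :: nat
  assumes finI: "\<And>j. j \<in> {1..J} \<Longrightarrow> finite (I j)"
    and sigma_pos: "\<And>j i. j \<in> {1..J} \<Longrightarrow> i \<in> I j \<Longrightarrow> sg i > 0"
    and sigD_nonneg: "\<And>j. j \<in> {1..J} \<Longrightarrow> sigD j \<ge> 0"
    and gam_pos: "\<And>j. j \<in> {1..J} \<Longrightarrow> gam sigD nD sg I j > 0"
    and C_pos: "C > 0"
    and V_pos: "\<And>j. j \<in> {1..J} \<Longrightarrow> V j > 0"
    and B_sub: "B \<subset> {1..J}"
    and alpha_pos: "alphaB sigD nD sg I V C J B > 0"
    and two_out: "card ({1..J} - B) \<ge> 2"
    and j'_out: "j' \<in> {1..J} - B"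
    and j'_viol: "VarB sigD nD sg I V C J B j' > ereal (V j')"
  shows "\<forall>j \<in> {1..J} - insert j' B.
           VarB sigD nD sg I V C J (insert j' B) j > VarB sigD nD sg I V C J B j"
proof
  fix j assume j: "j \<in> {1..J} - insert j' B"
  let ?g = "gam sigD nD sg I"
  define a where "a = alphaB sigD nD sg I V C J B"
  define a' where "a' = alphaB sigD nD sg I V C J (insert j' B)"
  have finB: "finite B" using B_sub finite_subset by blast
  have j'B: "j' \<notin> B" "j' \<in> {1..J}" using j'_out by auto
  have jB: "j \<notin> B" "j \<noteq> j'" "j \<in> {1..J}" using j by auto
  have ej': "eB sigD nD sg I V C J B j' = a" using j'B by (simp add: eB_def a_def)
  have ej: "eB sigD nD sg I V C J B j = a" using jB by (simp add: eB_def a_def)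
  have ej2: "eB sigD nD sg I V C J (insert j' B) j = a'" using jB by (simp add: eB_def a'_def)
  have a0: "a > 0" using alpha_pos a_def by simp
  have Vj': "VarB sigD nD sg I V C J B j' = ereal (?g j' / a)"
    using var_eq[of I j' sg sigD nD V C J B] finI sigma_pos sigD_nonneg j'B ej' a0 by simp
  have viol: "?g j' / a > V j'" using j'_viol Vj' by simp
  have gj': "?g j' > 0" "?g j > 0" using gam_pos j'B jB by auto
  have eps: "epsl sigD nD sg I V j' > a"
    using viol V_pos[OF j'B(2)] a0 unfolding epsl_def by (simp add: field_simps)
  define d where "d = dB sigD nD sg I J B"
  define cr where "cr = CRem sigD nD sg I V C B"
  have d2: "dB sigD nD sg I J (insert j' B) = d - ?g j'"
    unfolding d_def dB_def
    by (metis Diff_insert j'_out finite_Diff finite_atLeastAtMost sum_diff1)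
  have c2: "CRem sigD nD sg I V C (insert j' B) = cr - ?g j' * epsl sigD nD sg I V j'"
    unfolding cr_def CRem_def using finB j'B by simp
  have dpos: "d - ?g j' > 0"
  proof -
    have "?g j \<le> (\<Sum>k\<in>{1..J} - insert j' B. ?g k)"
      by (rule member_le_sum) (use j gam_pos in \<open>auto simp: less_imp_le\<close>)
    then show ?thesis using d2 gj' unfolding dB_def by simp
  qed
  have adef: "a = cr / d" unfolding a_def alphaB_def cr_def d_def ..
  have dp: "d > 0" using dpos gj' by simp
  have a'def: "a' = (cr - ?g j' * epsl sigD nD sg I V j') / (d - ?g j')"
    unfolding a'_def alphaB_def c2 d2 ..
  have "a' < a"
  proof -
    have "cr = a * d" using adef dp by simp
    then have "cr - ?g j' * epsl sigD nD sg I V j' < a * (d - ?g j')"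
      using eps gj' by (simp add: algebra_simps)
    then show ?thesis unfolding a'def using dpos by (simp add: divide_less_eq)
  qed
  have Vj: "VarB sigD nD sg I V C J B j = ereal (?g j / a)"
    using var_eq[of I j sg sigD nD V C J B] finI sigma_pos sigD_nonneg jB ej a0 by simp
  show "VarB sigD nD sg I V C J (insert j' B) j > VarB sigD nD sg I V C J B j"
  proof (cases "a' > 0")
    case True
    have "VarB sigD nD sg I V C J (insert j' B) j = ereal (?g j / a')"
      using var_eq[of I j sg sigD nD V C J "insert j' B"] finI sigma_pos sigD_nonneg jB ej2 True
      by simp
    moreover have "?g j / a' > ?g j / a"
      using True \<open>a' < a\<close> gj' by (simp add: frac_less2)
    ultimately show ?thesis using Vj by simp
  next
    case False
    then show ?thesis using Vj ej2 unfolding VarB_def[of _ _ _ _ _ _ _ "insert j' B"] by simp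
  qed
qed

end
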